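(* (i) Let $\Delta(\Phi_{23},\Phi_{13},\Phi_{12})$ and $\Delta(\Phi_1,\Phi_2,\Phi_3)$ be reciprocal triangles (in the sense of the context) with interior points $\Phi$ and $\Phi_{123}$ respectively, and let $a,b,c,a_1,b_2,c_3\in\mathbb{R}$ be the dilations defined by $$\Phi_{12}-\Phi=c(\Phi_1-\Phi_2),\quad \Phi_{23}-\Phi=a(\Phi_2-\Phi_3),\quad \Phi_{13}-\Phi=b(\Phi_3-\Phi_1),$$ $$\Phi_{123}-\Phi_3=c_3(\Phi_{13}-\Phi_{23}),\quad \Phi_{123}-\Phi_1=a_1(\Phi_{12}-\Phi_{13}),\quad \Phi_{123}-\Phi_2=b_2(\Phi_{23}-\Phi_{12}).$$ Then $$a_1=-\frac{a}{ab+bc+ca},\qquad b_2=-\frac{b}{ab+bc+ca},\qquad c_3=-\frac{c}{ab+bc+ca}.$$ (ii) Conversely, let $\Phi_1,\Phi_2,\Phi_3,\Phi$ be four generic points of $\mathbb{C}$, let $a,b,c\in\mathbb{R}$ be arbitrary non-vanishing real numbers and define $a_1,b_2,c_3$ by the three formulas above. Then the linear system consisting of the six equations above, in the unknowns $\Phi_{12},\Phi_{23},\Phi_{13},\Phi_{123}$, is compatible and its unique solution gives reciprocal triangles $\Delta(\Phi_{23},\Phi_{13},\Phi_{12})$ and $\Delta(\Phi_1,\Phi_2,\Phi_3)$ with interior points $\Phi$ and $\Phi_{123}$ respectively.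
   Context: The plane is identified with $\mathbb{C}$. Reciprocal triangles: let $\Delta(\Phi_{23},\Phi_{13},\Phi_{12})$ be a non-degenerate triangle and $\Phi$ an additional point; let $\Delta(\Phi_1,\Phi_2,\Phi_3)$ be a non-degenerate triangle whose edges $(\Phi_1,\Phi_2)$, $(\Phi_2,\Phi_3)$, $(\Phi_3,\Phi_1)$ are parallel to the segments $(\Phi,\Phi_{12})$, $(\Phi,\Phi_{23})$, $(\Phi,\Phi_{13})$ respectively. The two triangles are called reciprocal (with interior points $\Phi$ and $\Phi_{123}$) if there is a point $\Phi_{123}$ such that the segments $(\Phi_1,\Phi_{123})$, $(\Phi_2,\Phi_{123})$, $(\Phi_3,\Phi_{123})$ are parallel to the edges $(\Phi_{13},\Phi_{12})$, $(\Phi_{12},\Phi_{23})$, $(\Phi_{23},\Phi_{13})$ respectively. Parallelism of segments is expressed by real (dilation) factors as in the displayed equations. *)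

theory Defs
  imports "HOL-Analysis.Analysis"
begin

definition nondeg_triangle :: "complex \<Rightarrow> complex \<Rightarrow> complex \<Rightarrow> bool" where
  "nondeg_triangle p q r \<longleftrightarrow> \<not> collinear {p, q, r}"

text \<open>Parallelism expressed by a real dilation factor: x = t y for some real t.\<close>
definition dilation :: "complex \<Rightarrow> complex \<Rightarrow> bool" where
  "dilation x y \<longleftrightarrow> (\<exists>t::real. x = complex_of_real t * y)"

definition reciprocal ::
  "complex \<Rightarrow> complex \<Rightarrow> complex \<Rightarrow> complex \<Rightarrow> complex \<Rightarrow> complex \<Rightarrow> complex \<Rightarrow> complex \<Rightarrow> bool" where
  "reciprocal P23 P13 P12 P P1 P2 P3 P123 \<longleftrightarrow>
     nondeg_triangle P23 P13 P12 \<and> nondeg_triangle P1 P2 P3 \<and>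
     dilation (P12 - P) (P1 - P2) \<and> dilation (P23 - P) (P2 - P3) \<and> dilation (P13 - P) (P3 - P1) \<and>
     dilation (P123 - P1) (P12 - P13) \<and> dilation (P123 - P2) (P23 - P12) \<and>
     dilation (P123 - P3) (P13 - P23)"

definition dil_system ::
  "complex \<Rightarrow> complex \<Rightarrow> complex \<Rightarrow> complex \<Rightarrow> complex \<Rightarrow> complex \<Rightarrow> complex \<Rightarrow> complex \<Rightarrow>
   real \<Rightarrow> real \<Rightarrow> real \<Rightarrow> real \<Rightarrow> real \<Rightarrow> real \<Rightarrow> bool" where
  "dil_system P P1 P2 P3 P12 P23 P13 P123 a b c a1 b2 c3 \<longleftrightarrow>
     P12 - P = complex_of_real c * (P1 - P2) \<and>
     P23 - P = complex_of_real a * (P2 - P3) \<and>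
     P13 - P = complex_of_real b * (P3 - P1) \<and>
     P123 - P3 = complex_of_real c3 * (P13 - P23) \<and>
     P123 - P1 = complex_of_real a1 * (P12 - P13) \<and>
     P123 - P2 = complex_of_real b2 * (P23 - P12)"

end

theory Submission
  imports Defs
begin

lemma col0: "collinear {0::complex, x, y} \<longleftrightarrow> Re x * Im y = Im x * Re y"
proof
  assume "collinear {0::complex, x, y}"
  then have "x = 0 \<or> y = 0 \<or> (\<exists>c::real. y = c *\<^sub>R x)" by (simp add: collinear_lemma)
  then show "Re x * Im y = Im x * Re y" by auto
next
  assume h: "Re x * Im y = Im x * Re y"
  have "x = 0 \<or> y = 0 \<or> (\<exists>c::real. y = c *\<^sub>R x)"
  proof (cases "x = 0")
    case False
    show ?thesis
    proof (cases "Re x = 0")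
      case True
      with False have "Im x \<noteq> 0" by (simp add: complex_eq_iff)
      then have "y = (Im y / Im x) *\<^sub>R x" using h True
        by (simp add: complex_eq_iff field_simps)
      then show ?thesis by blast
    next
      case f: False
      then have "y = (Re y / Re x) *\<^sub>R x" using h
        by (simp add: complex_eq_iff field_simps)
      then show ?thesis by blast
    qed
  qed simp
  then show "collinear {0::complex, x, y}" by (simp add: collinear_lemma)
qed

lemma colD: "collinear {p::complex, q, r} \<longleftrightarrow> Re (p-q) * Im (r-q) = Im (p-q) * Re (r-q)"
  by (simp add: collinear_3 col0)

lemma lin2:
  fixes x y ur ui vr vi :: real
  assumes "x*ur + y * vr = 0" "x*ui + y * vi = 0"
  shows "x*(ur * vi - ui * vr) = 0" "y*(ur * vi - ui * vr) = 0"
proof -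
  have "x*(ur * vi - ui * vr) = vi*(x*ur + y * vr) - vr*(x*ui + y * vi)" by (simp add: algebra_simps)
  then show "x*(ur * vi - ui * vr) = 0" using assms by simp
  have "y*(ur * vi - ui * vr) = ur*(x*ui + y * vi) - ui*(x*ur + y * vr)" by (simp add: algebra_simps)
  then show "y*(ur * vi - ui * vr) = 0" using assms by simp
qed

lemma indep:
  assumes "\<not> collinear {P1::complex, P2, P3}"
    and "complex_of_real x * (P1 - P2) + complex_of_real y * (P2 - P3) = 0"
  shows "x = 0 \<and> y = 0"
proof -
  have D: "Re (P1-P2) * Im (P2-P3) - Im (P1-P2) * Re (P2-P3) \<noteq> 0"
    using assms(1) unfolding colD by (simp add: algebra_simps)
  have e1: "x * Re (P1-P2) + y * Re (P2-P3) = 0" and e2: "x * Im (P1-P2) + y * Im (P2-P3) = 0"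
    using assms(2) by (simp_all only: complex_eq_iff Re_complex_of_real Im_complex_of_real plus_complex.sel times_complex.sel zero_complex.sel) simp_all
  show ?thesis using lin2[OF e1 e2] D by simp
qed

lemma cross_comb:
  fixes u v :: complex and al be ga de :: real
  shows "Re (of_real al * u + of_real be * v) * Im (of_real ga * u + of_real de * v)
       - Im (of_real al * u + of_real be * v) * Re (of_real ga * u + of_real de * v)
       = (al * de - be * ga) * (Re u * Im v - Im u * Re v)"
  by (simp add: algebra_simps)

lemma real_part:
  fixes a b c a1 b2 c3 :: real
  assumes E1: "1 + a1*(b+c) + b2*c = 0" and E2: "a1*b - b2*a = 0"
    and E3: "c3*b - b2*c = 0" and E4: "1 + b2*a + c3*(a+b) = 0"
  shows "a1 = - a / (a*b + b*c + c*a) \<and> b2 = - b / (a*b + b*c + c*a) \<and> c3 = - c / (a*b + b*c + c*a)"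
proof -
  define S where "S = a*b + b*c + c*a"
  have ha: "a + a1 * S = 0"
  proof -
    have "a + a1 * S = a * (1 + a1*(b+c) + b2*c) + c * (a1*b - b2*a)" unfolding S_def by (simp add: algebra_simps)
    then show ?thesis using E1 E2 by simp
  qed
  have hb: "b + b2 * S = 0"
  proof -
    have "b + b2 * S = b * (1 + a1*(b+c) + b2*c) - (b+c) * (a1*b - b2*a)" unfolding S_def by (simp add: algebra_simps)
    then show ?thesis using E1 E2 by simp
  qed
  have hc: "c + c3 * S = 0"
  proof -
    have "c + c3 * S = c * (1 + b2*a + c3*(a+b)) + a * (c3*b - b2*c)" unfolding S_def by (simp add: algebra_simps)
    then show ?thesis using E3 E4 by simp
  qed
  have "S \<noteq> 0"
  proof
    assume "S = 0"
    then have "a = 0" "b = 0" "c = 0" using ha hb hc by simp_all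
    then show False using E1 by simp
  qed
  then show ?thesis using ha hb hc unfolding S_def[symmetric] by (simp add: field_simps)
qed

theorem theorem1:
  shows "(\<forall>P P1 P2 P3 P12 P23 P13 P123 (a::real) b c a1 b2 c3.
            reciprocal P23 P13 P12 P P1 P2 P3 P123 \<and>
            dil_system P P1 P2 P3 P12 P23 P13 P123 a b c a1 b2 c3 \<longrightarrow>
            a1 = - a / (a*b + b*c + c*a) \<and> b2 = - b / (a*b + b*c + c*a) \<and>
            c3 = - c / (a*b + b*c + c*a))
       \<and> (\<forall>P P1 P2 P3 (a::real) b c.
            nondeg_triangle P1 P2 P3 \<and> a \<noteq> 0 \<and> b \<noteq> 0 \<and> c \<noteq> 0 \<and> a*b + b*c + c*a \<noteq> 0 \<longrightarrow>
            (let a1 = - a / (a*b + b*c + c*a); b2 = - b / (a*b + b*c + c*a);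
                 c3 = - c / (a*b + b*c + c*a) in
              (\<exists>!(P12, P23, P13, P123). dil_system P P1 P2 P3 P12 P23 P13 P123 a b c a1 b2 c3) \<and>
              (\<forall>P12 P23 P13 P123. dil_system P P1 P2 P3 P12 P23 P13 P123 a b c a1 b2 c3 \<longrightarrow>
                  reciprocal P23 P13 P12 P P1 P2 P3 P123)))"
proof (rule conjI; intro allI impI)
  fix P P1 P2 P3 P12 P23 P13 P123 :: complex and a b c a1 b2 c3 :: real
  assume H: "reciprocal P23 P13 P12 P P1 P2 P3 P123 \<and>
            dil_system P P1 P2 P3 P12 P23 P13 P123 a b c a1 b2 c3"
  then have nd: "\<not> collinear {P1, P2, P3}" unfolding reciprocal_def nondeg_triangle_def by blast
  from H have e12: "P12 = P + of_real c * (P1 - P2)" and e23: "P23 = P + of_real a * (P2 - P3)"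
    and e13: "P13 = P + of_real b * (P3 - P1)"
    and e4: "P123 = P1 + of_real a1 * (P12 - P13)" and e5: "P123 = P2 + of_real b2 * (P23 - P12)"
    and e6: "P123 = P3 + of_real c3 * (P13 - P23)"
    unfolding dil_system_def by (auto simp: algebra_simps)
  have A: "complex_of_real (1 + a1*(b+c) + b2*c) * (P1 - P2) + complex_of_real (a1*b - b2*a) * (P2 - P3) = 0"
  proof -
    have "P1 + of_real a1 * (P12 - P13) = P2 + of_real b2 * (P23 - P12)" using e4 e5 by simp
    then have "P1 + of_real a1 * (of_real c * (P1 - P2) - of_real b * (P3 - P1))
       - (P2 + of_real b2 * (of_real a * (P2 - P3) - of_real c * (P1 - P2))) = 0"
      unfolding e12 e23 e13 by (simp add: algebra_simps)
    then show ?thesis by (simp add: algebra_simps)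
  qed
  have B: "complex_of_real (c3*b - b2*c) * (P1 - P2) + complex_of_real (1 + b2*a + c3*(a+b)) * (P2 - P3) = 0"
  proof -
    have "P2 + of_real b2 * (P23 - P12) = P3 + of_real c3 * (P13 - P23)" using e5 e6 by simp
    then have "P2 + of_real b2 * (of_real a * (P2 - P3) - of_real c * (P1 - P2))
       - (P3 + of_real c3 * (of_real b * (P3 - P1) - of_real a * (P2 - P3))) = 0"
      unfolding e12 e23 e13 by (simp add: algebra_simps)
    then show ?thesis by (simp add: algebra_simps)
  qed
  have F: "1 + a1*(b+c) + b2*c = 0" "a1*b - b2*a = 0" "c3*b - b2*c = 0" "1 + b2*a + c3*(a+b) = 0"
    using indep[OF nd A] indep[OF nd B] by auto
  show "a1 = - a / (a*b + b*c + c*a) \<and> b2 = - b / (a*b + b*c + c*a) \<and>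
            c3 = - c / (a*b + b*c + c*a)" by (rule real_part[OF F])
next
  fix P P1 P2 P3 :: complex and a b c :: real
  assume H: "nondeg_triangle P1 P2 P3 \<and> a \<noteq> 0 \<and> b \<noteq> 0 \<and> c \<noteq> 0 \<and> a*b + b*c + c*a \<noteq> 0"
  define S where "S = a*b + b*c + c*a"
  define a1 where "a1 = - a / S"
  define b2 where "b2 = - b / S"
  define c3 where "c3 = - c / S"
  have S0: "S \<noteq> 0" using H S_def by simp
  have nd: "\<not> collinear {P1, P2, P3}" using H unfolding nondeg_triangle_def by blast
  have E1: "1 + a1*(b+c) + b2*c = 0" and E2: "a1*b - b2*a = 0"
    and E3: "c3*b - b2*c = 0" and E4: "1 + b2*a + c3*(a+b) = 0"
    using S0 unfolding a1_def b2_def c3_def S_def by (simp_all add: field_simps)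
  have sol: "dil_system P P1 P2 P3 P12 P23 P13 P123 a b c a1 b2 c3 \<longleftrightarrow>
     P12 = P + of_real c * (P1 - P2) \<and> P23 = P + of_real a * (P2 - P3) \<and>
     P13 = P + of_real b * (P3 - P1) \<and> P123 = P1 + of_real a1 * (P12 - P13)" for P12 P23 P13 P123
  proof
    assume "dil_system P P1 P2 P3 P12 P23 P13 P123 a b c a1 b2 c3"
    then show "P12 = P + of_real c * (P1 - P2) \<and> P23 = P + of_real a * (P2 - P3) \<and>
     P13 = P + of_real b * (P3 - P1) \<and> P123 = P1 + of_real a1 * (P12 - P13)"
      unfolding dil_system_def by (auto simp: algebra_simps)
  next
    assume h: "P12 = P + of_real c * (P1 - P2) \<and> P23 = P + of_real a * (P2 - P3) \<and>
     P13 = P + of_real b * (P3 - P1) \<and> P123 = P1 + of_real a1 * (P12 - P13)"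
    then have hh: "P123 = P1 + of_real a1 * (P12 - P13)" "P12 = P + of_real c * (P1 - P2)" "P23 = P + of_real a * (P2 - P3)"
     "P13 = P + of_real b * (P3 - P1)" by auto
    have X: "P123 - P2 - of_real b2 * (P23 - P12) =
      complex_of_real (1 + a1*(b+c) + b2*c) * (P1 - P2) + complex_of_real (a1*b - b2*a) * (P2 - P3)"
      by (simp only: hh; simp add: algebra_simps)
    have Y: "P123 - P3 - of_real c3 * (P13 - P23) =
      complex_of_real (1 + a1*(b+c) + b2*c) * (P1 - P2) + complex_of_real (a1*b - b2*a) * (P2 - P3)
      + complex_of_real (c3*b - b2*c) * (P1 - P2) + complex_of_real (1 + b2*a + c3*(a+b)) * (P2 - P3)"
      by (simp only: hh; simp add: algebra_simps)
    have "P123 - P2 = of_real b2 * (P23 - P12)" using X E1 E2 by simp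
    moreover have "P123 - P3 = of_real c3 * (P13 - P23)" using Y E1 E2 E3 E4 by simp
    ultimately show "dil_system P P1 P2 P3 P12 P23 P13 P123 a b c a1 b2 c3"
      unfolding dil_system_def using h by simp
  qed
  have recip: "reciprocal P23 P13 P12 P P1 P2 P3 P123"
    if d: "dil_system P P1 P2 P3 P12 P23 P13 P123 a b c a1 b2 c3" for P12 P23 P13 P123
  proof -
    have h: "P12 = P + of_real c * (P1 - P2)" "P23 = P + of_real a * (P2 - P3)"
     "P13 = P + of_real b * (P3 - P1)" using sol d by blast+
    have u1: "P23 - P13 = of_real b * (P1 - P2) + of_real (a+b) * (P2 - P3)"
      by (simp only: h; simp add: algebra_simps)
    have u2: "P12 - P13 = of_real (b+c) * (P1 - P2) + of_real b * (P2 - P3)"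
      by (simp only: h; simp add: algebra_simps)
    have D: "Re (P1-P2) * Im (P2-P3) - Im (P1-P2) * Re (P2-P3) \<noteq> 0"
      using nd unfolding colD by (simp add: algebra_simps)
    have "Re (P23 - P13) * Im (P12 - P13) - Im (P23 - P13) * Re (P12 - P13)
        = (b * b - (a+b)*(b+c)) * (Re (P1-P2) * Im (P2-P3) - Im (P1-P2) * Re (P2-P3))"
      unfolding u1 u2 by (rule cross_comb)
    moreover have "b * b - (a+b)*(b+c) = - S" unfolding S_def by (simp add: algebra_simps)
    ultimately have "Re (P23 - P13) * Im (P12 - P13) - Im (P23 - P13) * Re (P12 - P13) \<noteq> 0"
      using D S0 by simp
    then have "\<not> collinear {P23, P13, P12}" unfolding colD by simp
    then show ?thesis using d nd unfolding reciprocal_def nondeg_triangle_def dil_system_def dilation_def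
      by (metis)
  qed
  have ex: "\<exists>!(P12, P23, P13, P123). dil_system P P1 P2 P3 P12 P23 P13 P123 a b c a1 b2 c3"
    unfolding sol by auto
  show "let a1 = - a / (a*b + b*c + c*a); b2 = - b / (a*b + b*c + c*a);
                 c3 = - c / (a*b + b*c + c*a) in
              (\<exists>!(P12, P23, P13, P123). dil_system P P1 P2 P3 P12 P23 P13 P123 a b c a1 b2 c3) \<and>
              (\<forall>P12 P23 P13 P123. dil_system P P1 P2 P3 P12 P23 P13 P123 a b c a1 b2 c3 \<longrightarrow>
                  reciprocal P23 P13 P12 P P1 P2 P3 P123)"
    unfolding Let_def S_def[symmetric] a1_def[symmetric] b2_def[symmetric] c3_def[symmetric]
    using ex recip by blast
qed

end
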